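(* For all finite multisets $\Gamma,\Delta$ of S4 formulas and all S4 formulas $A,B$: if $\mathrm{G3s}\vdash \Gamma\supset\Delta,\Box A,\Box B$ and $\mathrm{G3s}\vdash\Gamma\supset\Delta,\Box(A\to B),\Box B$, then $\mathrm{G3s}\vdash\Gamma\supset\Delta,\Box B$.
   Context: S4 formulas: $A ::= \bot \mid P \mid A_0\to A_1 \mid \Box A$ ($P$ atomic). Sequents $\Gamma\supset\Delta$ use finite multisets; $\Box\Gamma:=\{\Box C\mid C\in\Gamma\}$. G3s rules: (Ax) $P,\Gamma\supset\Delta,P$ ($P$ atomic); $(\bot\supset)$ $\bot,\Gamma\supset\Delta$; $(\to\supset)$ from $\Gamma\supset\Delta,A$ and $B,\Gamma\supset\Delta$ infer $A\to B,\Gamma\supset\Delta$; $(\supset\to)$ from $A,\Gamma\supset\Delta,B$ infer $\Gamma\supset\Delta,A\to B$; $(\Box\supset)$ from $A,\Box A,\Gamma\supset\Delta$ infer $\Box A,\Gamma\supset\Delta$; $(\supset\Box)$ from $\Box\Gamma\supset A$ infer $\Gamma',\Box\Gamma\supset\Delta',\Box A$. *)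

theory Defs
  imports Main "HOL-Library.Multiset"
begin

datatype 'a fm = Bot | At 'a | Imp "'a fm" "'a fm" | Box "'a fm"

inductive G3s :: "'a fm multiset \<Rightarrow> 'a fm multiset \<Rightarrow> bool" where
  Ax: "G3s (add_mset (At P) \<Gamma>) (add_mset (At P) \<Delta>)"
| BotL: "G3s (add_mset Bot \<Gamma>) \<Delta>"
| ImpL: "G3s \<Gamma> (add_mset A \<Delta>) \<Longrightarrow> G3s (add_mset B \<Gamma>) \<Delta> \<Longrightarrow> G3s (add_mset (Imp A B) \<Gamma>) \<Delta>"
| ImpR: "G3s (add_mset A \<Gamma>) (add_mset B \<Delta>) \<Longrightarrow> G3s \<Gamma> (add_mset (Imp A B) \<Delta>)"
| BoxL: "G3s (add_mset A (add_mset (Box A) \<Gamma>)) \<Delta> \<Longrightarrow> G3s (add_mset (Box A) \<Gamma>) \<Delta>"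
| BoxR: "G3s (image_mset Box \<Gamma>) {#A#} \<Longrightarrow> G3s (\<Gamma>' + image_mset Box \<Gamma>) (add_mset (Box A) \<Delta>')"

end

theory Submission
  imports Defs
begin

lemma Ax': "At P \<in># \<Gamma> \<Longrightarrow> At P \<in># \<Delta> \<Longrightarrow> G3s \<Gamma> \<Delta>"
  by (metis G3s.Ax insert_DiffM)

lemma BotL': "Bot \<in># \<Gamma> \<Longrightarrow> G3s \<Gamma> \<Delta>"
  by (metis G3s.BotL insert_DiffM)

lemma ImpL': "Imp A B \<in># \<Gamma> \<Longrightarrow> G3s (\<Gamma> - {#Imp A B#}) (add_mset A \<Delta>)
  \<Longrightarrow> G3s (add_mset B (\<Gamma> - {#Imp A B#})) \<Delta> \<Longrightarrow> G3s \<Gamma> \<Delta>"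
  by (metis G3s.ImpL insert_DiffM)

lemma ImpR': "Imp A B \<in># \<Delta> \<Longrightarrow> G3s (add_mset A \<Gamma>) (add_mset B (\<Delta> - {#Imp A B#})) \<Longrightarrow> G3s \<Gamma> \<Delta>"
  by (metis G3s.ImpR insert_DiffM)

lemma BoxL': "Box A \<in># \<Gamma> \<Longrightarrow> G3s (add_mset A \<Gamma>) \<Delta> \<Longrightarrow> G3s \<Gamma> \<Delta>"
  by (metis G3s.BoxL insert_DiffM)

lemma BoxR': "image_mset Box M \<subseteq># \<Gamma> \<Longrightarrow> G3s (image_mset Box M) {#A#} \<Longrightarrow> Box A \<in># \<Delta> \<Longrightarrow> G3s \<Gamma> \<Delta>"
  by (metis G3s.BoxR insert_DiffM subset_mset.diff_add)

lemma sub_add_diff: "add_mset x X \<subseteq># \<Gamma> \<Longrightarrow> X \<subseteq># \<Gamma> - {#x#}"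
  by (simp add: insert_subset_eq_iff)

lemma box_sub_diff: "image_mset Box M \<subseteq># \<Gamma> \<Longrightarrow> (\<And>y. x \<noteq> Box y) \<Longrightarrow> image_mset Box M \<subseteq># \<Gamma> - {#x#}"
proof -
  assume a: "image_mset Box M \<subseteq># \<Gamma>" and b: "\<And>y. x \<noteq> Box y"
  have "count (image_mset Box M) x = 0" using b by (auto simp: count_eq_zero_iff)
  then show ?thesis using a by (auto simp: subseteq_mset_def)
qed

lemma sub_add: "X \<subseteq># \<Gamma> \<Longrightarrow> X \<subseteq># add_mset a \<Gamma>"
  by (simp add: subseteq_mset_def le_Suc_eq)

lemma sub_lem: "X - {#c#} \<subseteq># Y \<Longrightarrow> add_mset b X - {#c#} \<subseteq># add_mset b Y"
  unfolding subseteq_mset_def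
proof (intro allI)
  fix a assume h: "\<forall>a. count (X - {#c#}) a \<le> count Y a"
  show "count (add_mset b X - {#c#}) a \<le> count (add_mset b Y) a"
    using h[rule_format, of a] by auto
qed

lemma wk: "G3s X Y \<Longrightarrow> X \<subseteq># \<Gamma> \<Longrightarrow> Y \<subseteq># \<Delta> \<Longrightarrow> G3s \<Gamma> \<Delta>"
proof (induction X Y arbitrary: \<Gamma> \<Delta> rule: G3s.induct)
  case (Ax P \<Gamma>1 \<Delta>1)
  have "At P \<in># \<Gamma>" "At P \<in># \<Delta>" using Ax.prems by (simp_all add: insert_subset_eq_iff)
  then show ?case by (rule Ax')
next
  case (BotL \<Gamma>1 \<Delta>1)
  have "Bot \<in># \<Gamma>" using BotL.prems by (simp add: insert_subset_eq_iff)
  then show ?case by (rule BotL')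
next
  case (ImpL \<Gamma>1 A \<Delta>1 B)
  have i: "Imp A B \<in># \<Gamma>" using ImpL.prems(1) by (simp add: insert_subset_eq_iff)
  have s: "\<Gamma>1 \<subseteq># \<Gamma> - {#Imp A B#}" using ImpL.prems(1) by (simp add: insert_subset_eq_iff)
  have 1: "G3s (\<Gamma> - {#Imp A B#}) (add_mset A \<Delta>)"
    using ImpL.IH(1)[OF s] ImpL.prems(2) by (simp add: mset_subset_eq_add_mset_cancel)
  have 2: "G3s (add_mset B (\<Gamma> - {#Imp A B#})) \<Delta>"
    using ImpL.IH(2)[of "add_mset B (\<Gamma> - {#Imp A B#})" \<Delta>] s ImpL.prems(2)
    by (simp add: mset_subset_eq_add_mset_cancel)
  show ?case by (rule ImpL'[OF i 1 2])
next
  case (ImpR A \<Gamma>1 B \<Delta>1)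
  have i: "Imp A B \<in># \<Delta>" using ImpR.prems(2) by (simp add: insert_subset_eq_iff)
  have s: "\<Delta>1 \<subseteq># \<Delta> - {#Imp A B#}" using ImpR.prems(2) by (simp add: insert_subset_eq_iff)
  have 1: "G3s (add_mset A \<Gamma>) (add_mset B (\<Delta> - {#Imp A B#}))"
    using ImpR.IH[of "add_mset A \<Gamma>" "add_mset B (\<Delta> - {#Imp A B#})"] s ImpR.prems(1)
    by (simp add: mset_subset_eq_add_mset_cancel)
  show ?case by (rule ImpR'[OF i 1])
next
  case (BoxL A \<Gamma>1 \<Delta>1)
  have i: "Box A \<in># \<Gamma>" using BoxL.prems(1) by (simp add: insert_subset_eq_iff)
  have s: "add_mset (Box A) \<Gamma>1 \<subseteq># \<Gamma>" using BoxL.prems(1) .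
  have 1: "G3s (add_mset A \<Gamma>) \<Delta>"
    using BoxL.IH[of "add_mset A \<Gamma>" \<Delta>] s BoxL.prems(2)
    by (simp add: mset_subset_eq_add_mset_cancel)
  show ?case by (rule BoxL'[OF i 1])
next
  case (BoxR \<Gamma>0 A \<Gamma>' \<Delta>')
  have i: "Box A \<in># \<Delta>" using BoxR.prems(2) by (simp add: insert_subset_eq_iff)
  have s: "image_mset Box \<Gamma>0 \<subseteq># \<Gamma>" using BoxR.prems(1)
    by (meson mset_subset_eq_add_right subset_mset.order_trans)
  show ?case by (rule BoxR'[OF s BoxR.hyps i])
qed

lemma invImpL: "G3s X Y \<Longrightarrow> Imp F G \<in># X \<Longrightarrow>
  G3s (X - {#Imp F G#}) (add_mset F Y) \<and> G3s (add_mset G (X - {#Imp F G#})) Y"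
proof (induction X Y rule: G3s.induct)
  case (Ax P \<Gamma>1 \<Delta>1)
  then show ?case by (auto intro: Ax')
next
  case (BotL \<Gamma>1 \<Delta>1)
  then show ?case by (auto intro: BotL')
next
  case (ImpL \<Gamma>1 A \<Delta>1 B)
  show ?case
  proof (cases "Imp A B = Imp F G")
    case True
    then show ?thesis using ImpL.hyps by auto
  next
    case False
    then have m: "Imp F G \<in># \<Gamma>1" using ImpL.prems by auto
    have e: "add_mset (Imp A B) \<Gamma>1 - {#Imp F G#} = add_mset (Imp A B) (\<Gamma>1 - {#Imp F G#})"
      using False by (metis diff_union_swap)
    have h1: "G3s (\<Gamma>1 - {#Imp F G#}) (add_mset F (add_mset A \<Delta>1))"
      using ImpL.IH(1)[OF m] by simp
    have h2: "G3s (add_mset G (\<Gamma>1 - {#Imp F G#})) (add_mset A \<Delta>1)"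
      using ImpL.IH(1)[OF m] by simp
    have h3: "G3s (add_mset B \<Gamma>1 - {#Imp F G#}) (add_mset F \<Delta>1)"
      using ImpL.IH(2) m by simp
    have h4: "G3s (add_mset G (add_mset B \<Gamma>1 - {#Imp F G#})) \<Delta>1"
      using ImpL.IH(2) m by simp
    show ?thesis unfolding e
      apply (rule conjI)
       apply (rule G3s.ImpL)
        apply (rule wk[OF h1]) apply simp apply simp
       apply (rule wk[OF h3]) apply (simp add: m) apply simp
      apply (rule ImpL'[of A B])
        apply simp
       apply (rule wk[OF h2]) apply simp apply simp
      apply (rule wk[OF h4]) apply (simp add: m) apply simp
      done
  qed
next
  case (ImpR A \<Gamma>1 B \<Delta>1)
  have m0: "Imp F G \<in># \<Gamma>1" using ImpR.prems by simp
  have m: "Imp F G \<in># add_mset A \<Gamma>1" using ImpR.prems by simp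
  have e: "add_mset A \<Gamma>1 - {#Imp F G#} = add_mset A (\<Gamma>1 - {#Imp F G#})"
    using m0 by simp
  have h1: "G3s (add_mset A (\<Gamma>1 - {#Imp F G#})) (add_mset F (add_mset B \<Delta>1))"
    using ImpR.IH[OF m] e by simp
  have h2: "G3s (add_mset G (add_mset A (\<Gamma>1 - {#Imp F G#}))) (add_mset B \<Delta>1)"
    using ImpR.IH[OF m] e by simp
  show ?case
    apply (rule conjI)
     apply (rule ImpR'[of A B])
      apply simp
     apply (rule wk[OF h1]) apply simp apply simp
    apply (rule ImpR'[of A B])
     apply simp
    apply (rule wk[OF h2]) apply (simp add: add_mset_commute) apply simp
    done
next
  case (BoxL A \<Gamma>1 \<Delta>1)
  have m0: "Imp F G \<in># \<Gamma>1" using BoxL.prems by simp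
  have m: "Imp F G \<in># add_mset A (add_mset (Box A) \<Gamma>1)" using BoxL.prems by simp
  have e: "add_mset A (add_mset (Box A) \<Gamma>1) - {#Imp F G#} = add_mset A (add_mset (Box A) (\<Gamma>1 - {#Imp F G#}))"
    using m0 by simp
  have h1: "G3s (add_mset A (add_mset (Box A) (\<Gamma>1 - {#Imp F G#}))) (add_mset F \<Delta>1)"
    using BoxL.IH[OF m] e by simp
  have h2: "G3s (add_mset G (add_mset A (add_mset (Box A) (\<Gamma>1 - {#Imp F G#})))) \<Delta>1"
    using BoxL.IH[OF m] e by simp
  show ?case
    apply (rule conjI)
     apply (rule BoxL'[of A])
      apply (simp add: m0)
     apply (rule wk[OF h1]) apply (simp add: m0) apply simp
    apply (rule BoxL'[of A])
     apply (simp add: m0)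
    apply (rule wk[OF h2]) apply (simp add: m0 add_mset_commute) apply simp
    done
next
  case (BoxR \<Gamma>0 A \<Gamma>' \<Delta>')
  have m: "Imp F G \<in># \<Gamma>'" using BoxR.prems by auto
  have s: "image_mset Box \<Gamma>0 \<subseteq># \<Gamma>' + image_mset Box \<Gamma>0 - {#Imp F G#}"
    using m by (auto dest!: multi_member_split)
  show ?case
    apply (rule conjI)
     apply (rule BoxR'[OF s BoxR.hyps]) apply simp
    apply (rule BoxR'[OF _ BoxR.hyps]) using s apply (rule sub_add)
    apply simp
    done
qed



lemma invImpR: "G3s X Y \<Longrightarrow> Imp F G \<in># Y \<Longrightarrow> G3s (add_mset F X) (add_mset G (Y - {#Imp F G#}))"
proof (induction X Y rule: G3s.induct)
  case (Ax P \<Gamma>1 \<Delta>1)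
  show ?case by (rule Ax'[of P]) (auto simp: in_diff_count)
next
  case (BotL \<Gamma>1 \<Delta>1)
  show ?case by (rule BotL') simp
next
  case (ImpL \<Gamma>1 A \<Delta>1 B)
  have m: "Imp F G \<in># \<Delta>1" using ImpL.prems by simp
  have h1: "G3s (add_mset F \<Gamma>1) (add_mset G (add_mset A \<Delta>1 - {#Imp F G#}))" using ImpL.IH(1) m by simp
  have h2: "G3s (add_mset F (add_mset B \<Gamma>1)) (add_mset G (\<Delta>1 - {#Imp F G#}))" using ImpL.IH(2) m by simp
  show ?case
    apply (rule ImpL'[of A B])
    subgoal by simp
    subgoal apply (rule wk[OF h1]) subgoal by (auto simp: subseteq_mset_def dest!: multi_member_split) subgoal using m by (auto simp: subseteq_mset_def dest!: multi_member_split) done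
    subgoal apply (rule wk[OF h2]) subgoal by (auto simp: subseteq_mset_def dest!: multi_member_split) subgoal using m by (auto simp: subseteq_mset_def dest!: multi_member_split) done
    done
next
  case (ImpR A \<Gamma>1 B \<Delta>1)
  show ?case
  proof (cases "Imp A B = Imp F G")
    case True
    then show ?thesis using ImpR.hyps by simp
  next
    case False
    have m: "Imp F G \<in># \<Delta>1" using ImpR.prems False by auto
    have h: "G3s (add_mset F (add_mset A \<Gamma>1)) (add_mset G (add_mset B \<Delta>1 - {#Imp F G#}))"
      using ImpR.IH m by simp
    show ?thesis
      apply (rule ImpR'[of A B])
      subgoal using False m by (auto simp: in_diff_count)
      subgoal apply (rule wk[OF h]) subgoal by (auto simp: subseteq_mset_def dest!: multi_member_split) subgoal using m False by (auto simp: subseteq_mset_def dest!: multi_member_split) done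
      done
  qed
next
  case (BoxL A \<Gamma>1 \<Delta>1)
  have h: "G3s (add_mset F (add_mset A (add_mset (Box A) \<Gamma>1))) (add_mset G (\<Delta>1 - {#Imp F G#}))"
    using BoxL.IH BoxL.prems by simp
  show ?case
    apply (rule BoxL'[of A])
    subgoal by simp
    subgoal apply (rule wk[OF h]) subgoal by (auto simp: subseteq_mset_def dest!: multi_member_split) subgoal by simp done
    done
next
  case (BoxR \<Gamma>0 A \<Gamma>' \<Delta>')
  have m: "Imp F G \<in># \<Delta>'" using BoxR.prems by simp
  show ?case
    apply (rule BoxR'[OF _ BoxR.hyps])
    subgoal by (auto simp: subseteq_mset_def dest!: multi_member_split)
    subgoal using m by (auto simp: in_diff_count)
    done
qed

fun info :: "'a fm \<Rightarrow> 'a fm multiset \<Rightarrow> 'a fm multiset \<Rightarrow> bool" where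
  "info Bot \<Gamma> \<Delta> = False"
| "info (At P) \<Gamma> \<Delta> = (At P \<in># \<Gamma>)"
| "info (Imp D E) \<Gamma> \<Delta> = G3s (add_mset D \<Gamma>) (add_mset E \<Delta>)"
| "info (Box D) \<Gamma> \<Delta> = (\<exists>M. image_mset Box M \<subseteq># \<Gamma> \<and> G3s (image_mset Box M) {#D#})"

lemma info_wk: "info C \<Gamma> \<Delta> \<Longrightarrow> \<Gamma> \<subseteq># \<Gamma>' \<Longrightarrow> \<Delta> \<subseteq># \<Delta>' \<Longrightarrow> info C \<Gamma>' \<Delta>'"
proof (cases C)
  case Bot
  then show "info C \<Gamma> \<Delta> \<Longrightarrow> \<Gamma> \<subseteq># \<Gamma>' \<Longrightarrow> \<Delta> \<subseteq># \<Delta>' \<Longrightarrow> info C \<Gamma>' \<Delta>'" by simp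
next
  case (At P)
  then show "info C \<Gamma> \<Delta> \<Longrightarrow> \<Gamma> \<subseteq># \<Gamma>' \<Longrightarrow> \<Delta> \<subseteq># \<Delta>' \<Longrightarrow> info C \<Gamma>' \<Delta>'"
    by (auto intro: mset_subset_eqD)
next
  case (Imp D E)
  show "info C \<Gamma> \<Delta> \<Longrightarrow> \<Gamma> \<subseteq># \<Gamma>' \<Longrightarrow> \<Delta> \<subseteq># \<Delta>' \<Longrightarrow> info C \<Gamma>' \<Delta>'"
    unfolding Imp info.simps
    by (erule wk) (simp_all add: mset_subset_eq_add_mset_cancel)
next
  case (Box D)
  show "info C \<Gamma> \<Delta> \<Longrightarrow> \<Gamma> \<subseteq># \<Gamma>' \<Longrightarrow> \<Delta> \<subseteq># \<Delta>' \<Longrightarrow> info C \<Gamma>' \<Delta>'"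
    unfolding Box info.simps by (meson subset_mset.order_trans)
qed

lemma info_ImpL: "info C \<Gamma> \<Delta> \<Longrightarrow> Imp F G \<in># \<Gamma> \<Longrightarrow>
   info C (\<Gamma> - {#Imp F G#}) (add_mset F \<Delta>) \<and> info C (add_mset G (\<Gamma> - {#Imp F G#})) \<Delta>"
proof (cases C)
  case Bot
  then show "info C \<Gamma> \<Delta> \<Longrightarrow> Imp F G \<in># \<Gamma> \<Longrightarrow> ?thesis" by simp
next
  case (At P)
  then show "info C \<Gamma> \<Delta> \<Longrightarrow> Imp F G \<in># \<Gamma> \<Longrightarrow> ?thesis" by (auto simp: in_diff_count)
next
  case (Imp D E)
  show "info C \<Gamma> \<Delta> \<Longrightarrow> Imp F G \<in># \<Gamma> \<Longrightarrow> ?thesis"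
  proof -
    assume a: "info C \<Gamma> \<Delta>" and m: "Imp F G \<in># \<Gamma>"
    have g: "G3s (add_mset D \<Gamma>) (add_mset E \<Delta>)" using a Imp by simp
    have m2: "Imp F G \<in># add_mset D \<Gamma>" using m by simp
    note h = invImpL[OF g m2]
    show ?thesis unfolding Imp info.simps
      apply (rule conjI)
      subgoal apply (rule wk[OF conjunct1[OF h]]) subgoal using m by (auto simp: subseteq_mset_def dest!: multi_member_split) subgoal by (auto simp: subseteq_mset_def dest!: multi_member_split) done
      subgoal apply (rule wk[OF conjunct2[OF h]]) subgoal using m by (auto simp: subseteq_mset_def dest!: multi_member_split) subgoal by (auto simp: subseteq_mset_def dest!: multi_member_split) done
      done
  qed
next
  case (Box D)
  show "info C \<Gamma> \<Delta> \<Longrightarrow> Imp F G \<in># \<Gamma> \<Longrightarrow> ?thesis"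
  proof -
    assume a: "info C \<Gamma> \<Delta>" and m: "Imp F G \<in># \<Gamma>"
    obtain M where M: "image_mset Box M \<subseteq># \<Gamma>" "G3s (image_mset Box M) {#D#}" using a Box by auto
    have s: "image_mset Box M \<subseteq># \<Gamma> - {#Imp F G#}" by (rule box_sub_diff[OF M(1)]) simp
    show ?thesis unfolding Box info.simps using s sub_add[OF s] M(2) by blast
  qed
qed

lemma info_ImpR: "info C \<Gamma> \<Delta> \<Longrightarrow> Imp F G \<in># \<Delta> \<Longrightarrow>
   info C (add_mset F \<Gamma>) (add_mset G (\<Delta> - {#Imp F G#}))"
proof (cases C)
  case Bot
  then show "info C \<Gamma> \<Delta> \<Longrightarrow> Imp F G \<in># \<Delta> \<Longrightarrow> ?thesis" by simp
next
  case (At P)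
  then show "info C \<Gamma> \<Delta> \<Longrightarrow> Imp F G \<in># \<Delta> \<Longrightarrow> ?thesis" by simp
next
  case (Imp D E)
  show "info C \<Gamma> \<Delta> \<Longrightarrow> Imp F G \<in># \<Delta> \<Longrightarrow> ?thesis"
  proof -
    assume a: "info C \<Gamma> \<Delta>" and m: "Imp F G \<in># \<Delta>"
    have g: "G3s (add_mset D \<Gamma>) (add_mset E \<Delta>)" using a Imp by simp
    have m2: "Imp F G \<in># add_mset E \<Delta>" using m by simp
    note h = invImpR[OF g m2]
    show ?thesis unfolding Imp info.simps
      apply (rule wk[OF h]) subgoal by (auto simp: subseteq_mset_def dest!: multi_member_split) subgoal using m by (auto simp: subseteq_mset_def dest!: multi_member_split) done
  qed
next
  case (Box D)
  show "info C \<Gamma> \<Delta> \<Longrightarrow> Imp F G \<in># \<Delta> \<Longrightarrow> ?thesis"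
    unfolding Box info.simps by (meson sub_add)
qed

definition cutprop :: "'a fm \<Rightarrow> bool" where
  "cutprop C \<longleftrightarrow> (\<forall>\<Gamma> \<Delta>. G3s \<Gamma> (add_mset C \<Delta>) \<longrightarrow> G3s (add_mset C \<Gamma>) \<Delta> \<longrightarrow> G3s \<Gamma> \<Delta>)"

lemma unbox: "\<forall>x\<in>#N. \<exists>y. x = Box y \<Longrightarrow> \<exists>M. N = image_mset Box M"
proof (induction N)
  case empty
  show ?case by (rule exI[of _ "{#}"]) simp
next
  case (add x N)
  then obtain M y where "N = image_mset Box M" "x = Box y" by auto
  then show ?case by (intro exI[of _ "add_mset y M"]) simp
qed


lemma right_lemma:
  fixes C :: "'a fm"
  assumes IH: "\<And>D::'a fm. size D < size C \<Longrightarrow> cutprop D"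
  shows "G3s X Y \<Longrightarrow> C \<in># X \<Longrightarrow> X - {#C#} \<subseteq># \<Gamma> \<Longrightarrow> Y \<subseteq># \<Delta> \<Longrightarrow> info C \<Gamma> \<Delta> \<Longrightarrow> G3s \<Gamma> \<Delta>"
proof (induction X Y arbitrary: \<Gamma> \<Delta> rule: G3s.induct)
  case (Ax P \<Gamma>1 \<Delta>1)
  have d: "At P \<in># \<Delta>" using Ax.prems(3) by (simp add: insert_subset_eq_iff)
  show ?case
  proof (cases "C = At P")
    case True
    then have "At P \<in># \<Gamma>" using Ax.prems(4) by simp
    then show ?thesis using d by (rule Ax')
  next
    case False
    have "At P \<in># add_mset (At P) \<Gamma>1 - {#C#}" using False by (auto simp: in_diff_count)
    then have "At P \<in># \<Gamma>" using Ax.prems(2) by (rule mset_subset_eqD[rotated])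
    then show ?thesis using d by (rule Ax')
  qed
next
  case (BotL \<Gamma>1 \<Delta>1)
  show ?case
  proof (cases "C = Bot")
    case True
    then show ?thesis using BotL.prems(4) by simp
  next
    case False
    have "Bot \<in># add_mset Bot \<Gamma>1 - {#C#}" using False by (auto simp: in_diff_count)
    then have "Bot \<in># \<Gamma>" using BotL.prems(2) by (rule mset_subset_eqD[rotated])
    then show ?thesis by (rule BotL')
  qed
next
  case (ImpL \<Gamma>1 A \<Delta>1 B)
  show ?case
  proof (cases "C = Imp A B")
    case True
    have s: "\<Gamma>1 \<subseteq># \<Gamma>" using ImpL.prems(2) True by simp
    have inf: "G3s (add_mset A \<Gamma>) (add_mset B \<Delta>)" using ImpL.prems(4) True by simp
    have 1: "G3s \<Gamma> (add_mset A (add_mset B \<Delta>))"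
      by (rule wk[OF ImpL.hyps(1) s]) (use sub_add[OF ImpL.prems(3), of B] in \<open>simp add: mset_subset_eq_add_mset_cancel\<close>)
    have c1: "cutprop A" by (rule IH) (simp add: True)
    have c2: "cutprop B" by (rule IH) (simp add: True)
    have 2: "G3s \<Gamma> (add_mset B \<Delta>)" using c1 1 inf unfolding cutprop_def by blast
    have 3: "G3s (add_mset B \<Gamma>) \<Delta>"
      by (rule wk[OF ImpL.hyps(2)]) (use s ImpL.prems(3) in \<open>simp_all add: mset_subset_eq_add_mset_cancel\<close>)
    show ?thesis using c2 2 3 unfolding cutprop_def by blast
  next
    case False
    have m: "C \<in># \<Gamma>1" using ImpL.prems(1) False by auto
    have e: "add_mset (Imp A B) \<Gamma>1 - {#C#} = add_mset (Imp A B) (\<Gamma>1 - {#C#})"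
      using m by (rule diff_union_swap2)
    have i: "Imp A B \<in># \<Gamma>" and s: "\<Gamma>1 - {#C#} \<subseteq># \<Gamma> - {#Imp A B#}"
      using ImpL.prems(2) unfolding e by (simp_all add: insert_subset_eq_iff)
    have inf: "info C (\<Gamma> - {#Imp A B#}) (add_mset A \<Delta>)" "info C (add_mset B (\<Gamma> - {#Imp A B#})) \<Delta>"
      using info_ImpL[OF ImpL.prems(4) i] by auto
    have 1: "G3s (\<Gamma> - {#Imp A B#}) (add_mset A \<Delta>)"
      by (rule ImpL.IH(1)[OF m s _ inf(1)]) (simp add: mset_subset_eq_add_mset_cancel ImpL.prems(3))
    have 2: "G3s (add_mset B (\<Gamma> - {#Imp A B#})) \<Delta>"
      apply (rule ImpL.IH(2)[OF _ _ ImpL.prems(3) inf(2)])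
      subgoal using m by simp
      subgoal using s by (rule sub_lem)
      done
    show ?thesis by (rule ImpL'[OF i 1 2])
  qed
next
  case (ImpR A \<Gamma>1 B \<Delta>1)
  have i: "Imp A B \<in># \<Delta>" and s: "\<Delta>1 \<subseteq># \<Delta> - {#Imp A B#}"
    using ImpR.prems(3) by (simp_all add: insert_subset_eq_iff)
  have 1: "G3s (add_mset A \<Gamma>) (add_mset B (\<Delta> - {#Imp A B#}))"
    apply (rule ImpR.IH)
    subgoal using ImpR.prems(1) by simp
    subgoal using ImpR.prems(1,2) by (auto simp: subseteq_mset_def dest!: multi_member_split)
    subgoal using s by (simp add: mset_subset_eq_add_mset_cancel)
    subgoal by (rule info_ImpR[OF ImpR.prems(4) i])
    done
  show ?case by (rule ImpR'[OF i 1])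
next
  case (BoxL A \<Gamma>1 \<Delta>1)
  show ?case
  proof (cases "C = Box A")
    case True
    have 1: "G3s (add_mset A \<Gamma>) \<Delta>"
      apply (rule BoxL.IH)
      subgoal using True by simp
      subgoal using BoxL.prems(2) True by (auto simp: subseteq_mset_def)
      subgoal by (rule BoxL.prems(3))
      subgoal by (rule info_wk[OF BoxL.prems(4)]) (auto simp: subseteq_mset_def)
      done
    obtain M where M: "image_mset Box M \<subseteq># \<Gamma>" "G3s (image_mset Box M) {#A#}"
      using BoxL.prems(4) True by auto
    have 2: "G3s \<Gamma> (add_mset A \<Delta>)" by (rule wk[OF M(2) M(1)]) simp
    have c: "cutprop A" by (rule IH) (simp add: True)
    show ?thesis using c 1 2 unfolding cutprop_def by blast
  next
    case False
    have m: "C \<in># \<Gamma>1" using BoxL.prems(1) False by auto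
    have e: "add_mset (Box A) \<Gamma>1 - {#C#} = add_mset (Box A) (\<Gamma>1 - {#C#})"
      using m by (rule diff_union_swap2)
    have i: "Box A \<in># \<Gamma>" using BoxL.prems(2) unfolding e by (simp add: insert_subset_eq_iff)
    have 1: "G3s (add_mset A \<Gamma>) \<Delta>"
      apply (rule BoxL.IH)
      subgoal using m by simp
      subgoal using BoxL.prems(2) by (rule sub_lem)
      subgoal by (rule BoxL.prems(3))
      subgoal by (rule info_wk[OF BoxL.prems(4)]) (auto simp: subseteq_mset_def)
      done
    show ?thesis by (rule BoxL'[OF i 1])
  qed
next
  case (BoxR \<Gamma>0 A \<Gamma>' \<Delta>')
  have i: "Box A \<in># \<Delta>" using BoxR.prems(3) by (simp add: insert_subset_eq_iff)
  show ?case
  proof (cases "C \<in># image_mset Box \<Gamma>0")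
    case True
    then obtain D where D: "C = Box D" by auto
    obtain M where M: "image_mset Box M \<subseteq># \<Gamma>" "G3s (image_mset Box M) {#D#}"
      using BoxR.prems(4) D by auto
    define N where "N = image_mset Box M \<union># (image_mset Box \<Gamma>0 - {#C#})"
    have s0: "image_mset Box \<Gamma>0 - {#C#} \<subseteq># \<Gamma>' + image_mset Box \<Gamma>0 - {#C#}"
      by (auto simp: subseteq_mset_def)
    have s1: "image_mset Box \<Gamma>0 - {#C#} \<subseteq># \<Gamma>"
      using s0 BoxR.prems(2) by (rule subset_mset.order_trans)
    have sN: "N \<subseteq># \<Gamma>" unfolding N_def using M(1) s1 by (rule subset_mset.sup_least)
    have sN2: "N \<subseteq># image_mset Box M + image_mset Box \<Gamma>0"
      unfolding N_def by (auto simp: subseteq_mset_def)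
    have bx: "\<forall>x\<in>#N. \<exists>y. x = Box y"
    proof
      fix x assume "x \<in># N"
      then have "x \<in># image_mset Box M + image_mset Box \<Gamma>0" using sN2 by (rule mset_subset_eqD[rotated])
      then show "\<exists>y. x = Box y" by auto
    qed
    obtain K where K: "N = image_mset Box K" using unbox[OF bx] by auto
    have G: "G3s N {#A#}"
      apply (rule BoxR.IH)
      subgoal using True .
      subgoal unfolding N_def by (rule subset_mset.sup_ge2)
      subgoal by simp
      subgoal unfolding D info.simps N_def using M(2) by (blast intro: subset_mset.sup_ge1)
      done
    show ?thesis using BoxR'[of K \<Gamma> A \<Delta>] sN G i K by simp
  next
    case False
    have m: "C \<in># \<Gamma>'" using BoxR.prems(1) False by auto
    have s0: "image_mset Box \<Gamma>0 \<subseteq># \<Gamma>' + image_mset Box \<Gamma>0 - {#C#}"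
      using m by (auto dest!: multi_member_split)
    have s: "image_mset Box \<Gamma>0 \<subseteq># \<Gamma>"
      using s0 BoxR.prems(2) by (rule subset_mset.order_trans)
    show ?thesis by (rule BoxR'[OF s BoxR.hyps i])
  qed
qed


lemma R_lemma:
  fixes C :: "'a fm"
  assumes IH: "\<And>D::'a fm. size D < size C \<Longrightarrow> cutprop D"
    and i: "info C \<Gamma> \<Delta>" and g: "G3s (add_mset C \<Gamma>) \<Delta>"
  shows "G3s \<Gamma> \<Delta>"
proof -
  have a: "C \<in># add_mset C \<Gamma>" by simp
  have b: "add_mset C \<Gamma> - {#C#} \<subseteq># \<Gamma>" by simp
  have c: "\<Delta> \<subseteq># \<Delta>" by simp
  show ?thesis by (rule right_lemma[OF IH g a b c i])
qed

lemma left_lemma: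
  fixes C :: "'a fm"
  assumes IH: "\<And>D::'a fm. size D < size C \<Longrightarrow> cutprop D"
  shows "G3s X Y \<Longrightarrow> C \<in># Y \<Longrightarrow> X \<subseteq># \<Gamma> \<Longrightarrow> Y - {#C#} \<subseteq># \<Delta> \<Longrightarrow> G3s (add_mset C \<Gamma>) \<Delta> \<Longrightarrow> G3s \<Gamma> \<Delta>"
proof (induction X Y arbitrary: \<Gamma> \<Delta> rule: G3s.induct)
  have R: "\<And>\<Gamma> \<Delta>. info C \<Gamma> \<Delta> \<Longrightarrow> G3s (add_mset C \<Gamma>) \<Delta> \<Longrightarrow> G3s \<Gamma> \<Delta>"
    using R_lemma[OF IH] by blast
  {
  case (Ax P \<Gamma>1 \<Delta>1)
  have g: "At P \<in># \<Gamma>" using Ax.prems(2) by (simp add: insert_subset_eq_iff)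
  show ?case
  proof (cases "C = At P")
    case True
    have "info C \<Gamma> \<Delta>" using True g by simp
    then show ?thesis by (rule R[OF _ Ax.prems(4)])
  next
    case False
    have "At P \<in># add_mset (At P) \<Delta>1 - {#C#}" using False by (auto simp: in_diff_count)
    then have "At P \<in># \<Delta>" using Ax.prems(3) by (rule mset_subset_eqD[rotated])
    then show ?thesis using g by (intro Ax')
  qed
next
  case (BotL \<Gamma>1 \<Delta>1)
  have "Bot \<in># \<Gamma>" using BotL.prems(2) by (simp add: insert_subset_eq_iff)
  then show ?case by (rule BotL')
next
  case (ImpL \<Gamma>1 A \<Delta>1 B)
  have i: "Imp A B \<in># \<Gamma>" and s: "\<Gamma>1 \<subseteq># \<Gamma> - {#Imp A B#}"
    using ImpL.prems(2) by (simp_all add: insert_subset_eq_iff)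
  have m2: "Imp A B \<in># add_mset C \<Gamma>" using i by simp
  note inv = invImpL[OF ImpL.prems(4) m2]
  have 1: "G3s (\<Gamma> - {#Imp A B#}) (add_mset A \<Delta>)"
    apply (rule ImpL.IH(1))
    subgoal using ImpL.prems(1) by simp
    subgoal by (rule s)
    subgoal using ImpL.prems(1,3) by (auto simp: subseteq_mset_def dest!: multi_member_split)
    subgoal apply (rule wk[OF conjunct1[OF inv]])
      subgoal using i by (auto simp: subseteq_mset_def dest!: multi_member_split)
      subgoal by simp
      done
    done
  have 2: "G3s (add_mset B (\<Gamma> - {#Imp A B#})) \<Delta>"
    apply (rule ImpL.IH(2))
    subgoal using ImpL.prems(1) by simp
    subgoal using s by (simp add: mset_subset_eq_add_mset_cancel)
    subgoal using ImpL.prems(3) .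
    subgoal apply (rule wk[OF conjunct2[OF inv]])
      subgoal using i by (auto simp: subseteq_mset_def dest!: multi_member_split)
      subgoal by simp
      done
    done
  show ?case by (rule ImpL'[OF i 1 2])
next
  case (ImpR A \<Gamma>1 B \<Delta>1)
  show ?case
  proof (cases "C = Imp A B")
    case True
    have "info C \<Gamma> \<Delta>" unfolding True info.simps
      apply (rule wk[OF ImpR.hyps])
      subgoal using ImpR.prems(2) by (simp add: mset_subset_eq_add_mset_cancel)
      subgoal using ImpR.prems(3) True by (simp add: mset_subset_eq_add_mset_cancel)
      done
    then show ?thesis by (rule R[OF _ ImpR.prems(4)])
  next
    case False
    have m: "C \<in># \<Delta>1" using ImpR.prems(1) False by auto
    have e: "add_mset (Imp A B) \<Delta>1 - {#C#} = add_mset (Imp A B) (\<Delta>1 - {#C#})"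
      using m by (rule diff_union_swap2)
    have i: "Imp A B \<in># \<Delta>" and s: "\<Delta>1 - {#C#} \<subseteq># \<Delta> - {#Imp A B#}"
      using ImpR.prems(3) unfolding e by (simp_all add: insert_subset_eq_iff)
    have m2: "Imp A B \<in># \<Delta>" using i .
    note inv = invImpR[OF ImpR.prems(4) m2]
    have 1: "G3s (add_mset A \<Gamma>) (add_mset B (\<Delta> - {#Imp A B#}))"
      apply (rule ImpR.IH)
      subgoal using m by simp
      subgoal using ImpR.prems(2) by (simp add: mset_subset_eq_add_mset_cancel)
      subgoal using s by (rule sub_lem)
      subgoal using inv by (simp add: add_mset_commute)
      done
    show ?thesis by (rule ImpR'[OF i 1])
  qed
next
  case (BoxL A \<Gamma>1 \<Delta>1)
  have i: "Box A \<in># \<Gamma>" using BoxL.prems(2) by (simp add: insert_subset_eq_iff)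
  have 1: "G3s (add_mset A \<Gamma>) \<Delta>"
    apply (rule BoxL.IH)
    subgoal using BoxL.prems(1) .
    subgoal using BoxL.prems(2) by (simp add: mset_subset_eq_add_mset_cancel)
    subgoal using BoxL.prems(3) .
    subgoal by (rule wk[OF BoxL.prems(4)]) (auto simp: subseteq_mset_def)
    done
  show ?case by (rule BoxL'[OF i 1])
next
  case (BoxR \<Gamma>0 A \<Gamma>' \<Delta>')
  have s: "image_mset Box \<Gamma>0 \<subseteq># \<Gamma>" using BoxR.prems(2)
    by (meson mset_subset_eq_add_right subset_mset.order_trans)
  show ?case
  proof (cases "C = Box A")
    case True
    have "info C \<Gamma> \<Delta>" unfolding True info.simps using s BoxR.hyps by blast
    then show ?thesis by (rule R[OF _ BoxR.prems(4)])
  next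
    case False
    have "Box A \<in># add_mset (Box A) \<Delta>' - {#C#}" using False by (auto simp: in_diff_count)
    then have i: "Box A \<in># \<Delta>" using BoxR.prems(3) by (rule mset_subset_eqD[rotated])
    show ?thesis by (rule BoxR'[OF s BoxR.hyps i])
  qed
  }
qed

lemma cut_all: "cutprop C"
proof (induction C rule: measure_induct_rule[of size])
  case (less C)
  show ?case unfolding cutprop_def
  proof (intro allI impI)
    fix \<Gamma> \<Delta> assume a: "G3s \<Gamma> (add_mset C \<Delta>)" "G3s (add_mset C \<Gamma>) \<Delta>"
    show "G3s \<Gamma> \<Delta>" by (rule left_lemma[OF less a(1) _ _ _ a(2)]) simp_all
  qed
qed

lemma cut: "G3s \<Gamma> (add_mset C \<Delta>) \<Longrightarrow> G3s (add_mset C \<Gamma>) \<Delta> \<Longrightarrow> G3s \<Gamma> \<Delta>"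
  using cut_all[of C] unfolding cutprop_def by blast

lemma ident: "G3s (add_mset F \<Gamma>) (add_mset F \<Delta>)"
proof (induction F arbitrary: \<Gamma> \<Delta>)
  case Bot
  show ?case by (rule G3s.BotL)
next
  case (At P)
  show ?case by (rule G3s.Ax)
next
  case (Imp D E)
  show ?case
    apply (rule G3s.ImpR)
    apply (rule ImpL'[of D E])
    subgoal by simp
    subgoal apply (rule wk[OF Imp.IH(1)[of \<Gamma> "add_mset E \<Delta>"]])
      subgoal by (auto simp: subseteq_mset_def)
      subgoal by (auto simp: subseteq_mset_def)
      done
    subgoal apply (rule wk[OF Imp.IH(2)[of "add_mset D \<Gamma>" \<Delta>]])
      subgoal by (auto simp: subseteq_mset_def)
      subgoal by (auto simp: subseteq_mset_def)
      done
    done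
next
  case (Box D)
  have 1: "G3s {#Box D#} {#D#}"
    apply (rule BoxL'[of D])
    subgoal by simp
    subgoal using Box.IH[of "{#Box D#}" "{#}"] by simp
    done
  show ?case
    apply (rule BoxR'[of "{#D#}" _ D])
    subgoal by simp
    subgoal using 1 by simp
    subgoal by simp
    done
qed

theorem mainTheorem3:
  fixes \<Gamma> \<Delta> :: "'a fm multiset" and A B :: "'a fm"
  assumes "G3s \<Gamma> (\<Delta> + {#Box A, Box B#})"
      and "G3s \<Gamma> (\<Delta> + {#Box (Imp A B), Box B#})"
  shows "G3s \<Gamma> (\<Delta> + {#Box B#})"
proof -
  have f0: "G3s {#Box A, Box (Imp A B)#} {#B#}"
    apply (rule BoxL'[of A])
    subgoal by simp
    apply (rule BoxL'[of "Imp A B"])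
    subgoal by simp
    apply (rule ImpL'[of A B])
    subgoal by simp
    subgoal apply (rule wk[OF ident[of A "{#Box A, Box (Imp A B)#}" "{#B#}"]])
      subgoal by (auto simp: subseteq_mset_def)
      subgoal by (auto simp: subseteq_mset_def)
      done
    subgoal apply (rule wk[OF ident[of B "{#A, Box A, Box (Imp A B)#}" "{#}"]])
      subgoal by (auto simp: subseteq_mset_def)
      subgoal by (auto simp: subseteq_mset_def)
      done
    done
  have f: "G3s (add_mset (Box (Imp A B)) (add_mset (Box A) \<Gamma>)) (\<Delta> + {#Box B#})"
    apply (rule BoxR'[of "{#A, Imp A B#}" _ B])
    subgoal by (auto simp: subseteq_mset_def)
    subgoal using f0 by (simp add: add_mset_commute)
    subgoal by simp
    done
  have s1: "G3s (add_mset (Box A) \<Gamma>) (\<Delta> + {#Box B#})"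
    apply (rule cut[of _ "Box (Imp A B)"])
    subgoal by (rule wk[OF assms(2)]) (auto simp: subseteq_mset_def)
    subgoal by (rule f)
    done
  show ?thesis
    apply (rule cut[of _ "Box A"])
    subgoal by (rule wk[OF assms(1)]) (auto simp: subseteq_mset_def)
    subgoal by (rule s1)
    done
qed

end
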